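(* Let $\mathrm{FRS}_q^{(m)}[n,k]$ be the $m$-folded Reed–Solomon code with block length $N=n/m$ and rate $R=k/n$, let $s\in[m]$, and let $\mathbf y\in(\mathbb F_q^m)^N$. Let $U$ be an affine subspace, of some dimension $l<s$, of the space $\mathbb F_q[X]_{<k}$ of polynomials of degree less than $k$, as returned by the list decoder (see context) on input $\mathbf y$, and let $f\in\mathbb F_q[X]_{<k}$ be a polynomial whose FRS encoding differs from $\mathbf y$ in at most a fraction $\frac{s}{s+1}\left(1-\frac{mR}{m-s+1}\right)$ of the $N$ positions (so $f\in U$). Let $t$ be an integer with $l\le t\le q-1$, and let $\lambda_1,\dots,\lambda_t$ be chosen so that $\lambda_i$ is uniform on $\mathbb F_q\setminus\{0,\lambda_1,\dots,\lambda_{i-1}\}$ for $i\in[t]$ (i.e. $\{\lambda_1,\dots,\lambda_t\}$ is a uniformly random $t$-subset of $\mathbb F_q^*$). Then, with probability at least $$\frac{\sum_{i=l}^{t}\binom{q-k+l-1}{i}\binom{k-l}{t-i}}{\binom{q-1}{t}},$$ $f$ is the unique element $g\in U$ with $g(\lambda_i)=f(\lambda_i)$ for all $i\in[t]$, so that $f$ is uniquely recovered from $U$ and the values $f(\lambda_1),\dots,f(\lambda_t)$. Furthermore, whenever this uniqueness fails, the decoder can detect it (from $U$ and $\lambda_1,\dots,\lambda_t$) and declare a decoding failure.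
   Context: Let $q$ be a prime power, $\gamma$ a primitive element of $\mathbb F_q$, $m\ge1$, $n\le q-1$ a multiple of $m$, $1\le k<n$. The $m$-folded Reed–Solomon code $\mathrm{FRS}_q^{(m)}[n,k]$ is a code over $\mathbb F_q^m$ of block length $N=n/m$ and rate $R=k/n$ encoding $f$ of degree $\le k-1$ as the word whose $i$-th symbol is $(f(\gamma^{(i-1)m}),\dots,f(\gamma^{im-1}))$. $\mathbb F_q^*=\mathbb F_q\setminus\{0\}$, $[i]=\{1,\dots,i\}$. List decoder (Guruswami–Wang, used as a given): for $s\in[m]$ it outputs from $\mathbf y$ an affine subspace $U=\{\mathbf M\mathbf x+\mathbf z:\mathbf x\in\mathbb F_q^l\}$ of coefficient vectors of polynomials of degree $<k$, with $l\le s-1$, $\mathbf M\in\mathbb F_q^{k\times l}$ of rank $l$, $\mathbf z\in\mathbb F_q^k$, containing all polynomials of degree $<k$ whose FRS encoding differs from $\mathbf y$ in at most a fraction $\frac{s}{s+1}(1-\frac{mR}{m-s+1})$ of the $N$ positions. *)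

theory Defs
  imports Complex_Main "HOL-Computational_Algebra.Polynomial"
begin

definition primitive_elem :: "'a::{finite,field} \<Rightarrow> bool" where
  "primitive_elem \<gamma> \<longleftrightarrow> (\<forall>x::'a. x \<noteq> 0 \<longrightarrow> (\<exists>i::nat. x = \<gamma> ^ i))"

text \<open>The i-th symbol (i < N, 0-indexed) of the m-folded RS encoding of f is the tuple
  (f(gamma^(i m)), ..., f(gamma^(i m + m - 1))). A received word y in (F_q^m)^N is a
  function y i j, i < N, j < m.\<close>
definition frs_dist :: "'a::{finite,field} \<Rightarrow> nat \<Rightarrow> nat \<Rightarrow> (nat \<Rightarrow> nat \<Rightarrow> 'a) \<Rightarrow> 'a poly \<Rightarrow> nat" where
  "frs_dist \<gamma> m N y f = card {i. i < N \<and> (\<exists>j<m. y i j \<noteq> poly f (\<gamma> ^ (i * m + j)))}"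

text \<open>Affine subspace {M x + z : x in F_q^l} of polynomials, the columns of M being the
  polynomials b 0, ..., b (l-1).\<close>
definition affine_span :: "'a::field poly \<Rightarrow> (nat \<Rightarrow> 'a poly) \<Rightarrow> nat \<Rightarrow> 'a poly set" where
  "affine_span z b l = {z + (\<Sum>j<l. smult (x j) (b j)) | x. True}"

definition lin_indep_polys :: "(nat \<Rightarrow> 'a::field poly) \<Rightarrow> nat \<Rightarrow> bool" where
  "lin_indep_polys b l \<longleftrightarrow> (\<forall>c. (\<Sum>j<l. smult (c j) (b j)) = 0 \<longrightarrow> (\<forall>j<l. c j = 0))"

end

theory Submission imports Defs "HOL-Library.FuncSet" begin


definition M :: "nat \<Rightarrow> nat \<Rightarrow> nat \<Rightarrow> nat \<Rightarrow> nat" where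
  "M t d g b = (\<Sum>i\<le>t. if d \<le> i then (g choose i) * (b choose (t - i)) else 0)"

lemma M_P1: "M (Suc t) (Suc d) (Suc g) b = M t d g b + M (Suc t) (Suc d) g b"
proof -
  have "M (Suc t) (Suc d) (Suc g) b = (\<Sum>i\<le>t. if d \<le> i then (Suc g choose Suc i) * (b choose (t - i)) else 0)"
    unfolding M_def apply (subst sum.atMost_Suc_shift) apply (simp del: binomial_Suc_Suc)
    apply (rule sum.cong) apply simp
    apply (simp only: diff_Suc_Suc) done
  also have "\<dots> = (\<Sum>i\<le>t. (if d \<le> i then (g choose i) * (b choose (t - i)) else 0)
       + (if d \<le> i then (g choose Suc i) * (b choose (t - i)) else 0))"
    by (intro sum.cong) (auto simp: algebra_simps)
  also have "\<dots> = M t d g b + (\<Sum>i\<le>t. (if d \<le> i then (g choose Suc i) * (b choose (t - i)) else 0))"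
    by (simp add: sum.distrib M_def)
  also have "(\<Sum>i\<le>t. (if d \<le> i then (g choose Suc i) * (b choose (t - i)) else 0)) = M (Suc t) (Suc d) g b"
    unfolding M_def apply (subst sum.atMost_Suc_shift) apply simp
    apply (rule sum.cong) apply simp
    apply (simp only: diff_Suc_Suc) done
  finally show ?thesis .
qed

lemma M_P2: "M (Suc t) d g (Suc b) = M t d g b + M (Suc t) d g b"
proof -
  have "M (Suc t) d g (Suc b) = (\<Sum>i\<le>t. if d \<le> i then (g choose i) * (Suc b choose (Suc t - i)) else 0)
     + (if d \<le> Suc t then g choose Suc t else 0)"
    unfolding M_def by (subst sum.atMost_Suc) simp
  also have "(\<Sum>i\<le>t. if d \<le> i then (g choose i) * (Suc b choose (Suc t - i)) else 0)
      = (\<Sum>i\<le>t. (if d \<le> i then (g choose i) * (b choose (t - i)) else 0)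
         + (if d \<le> i then (g choose i) * (b choose (Suc t - i)) else 0))"
    by (intro sum.cong) (auto simp: Suc_diff_le algebra_simps)
  also have "\<dots> = M t d g b + (\<Sum>i\<le>t. (if d \<le> i then (g choose i) * (b choose (Suc t - i)) else 0))"
    by (simp add: sum.distrib M_def)
  also have "M t d g b + (\<Sum>i\<le>t. (if d \<le> i then (g choose i) * (b choose (Suc t - i)) else 0))
     + (if d \<le> Suc t then g choose Suc t else 0) = M t d g b + M (Suc t) d g b"
    unfolding M_def by (simp only: sum.atMost_Suc) simp
  finally show ?thesis .
qed

lemma M_zero_g: "1 \<le> d \<Longrightarrow> M t d 0 b = 0"
  unfolding M_def by (intro sum.neutral) auto

lemma M_zero_t: "1 \<le> d \<Longrightarrow> M 0 d g b = 0"
  unfolding M_def by simp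

lemma M_le: "M t d g b \<le> (g + b) choose t"
proof -
  have "M t d g b \<le> (\<Sum>i\<le>t. (g choose i) * (b choose (t - i)))"
    unfolding M_def by (intro sum_mono) auto
  also have "\<dots> = (g + b) choose t" by (rule vandermonde)
  finally show ?thesis .
qed

lemma M_eq: "M t d g b = (\<Sum>i=d..t. (g choose i) * (b choose (t - i)))"
  unfolding M_def
  by (rule sum.mono_neutral_cong_right) auto



definition subsp :: "'a::field poly set \<Rightarrow> bool" where
  "subsp W \<longleftrightarrow> 0 \<in> W \<and> (\<forall>x\<in>W. \<forall>y\<in>W. x + y \<in> W) \<and> (\<forall>c x. x \<in> W \<longrightarrow> smult c x \<in> W)"

definition cr :: "'a::field poly set \<Rightarrow> 'a set" where
  "cr W = {a. \<forall>w\<in>W. poly w a = 0}"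

definition Wa :: "'a::field poly set \<Rightarrow> 'a \<Rightarrow> 'a poly set" where
  "Wa W a = {w\<in>W. poly w a = 0}"

definition Good :: "'a::field poly set \<Rightarrow> 'a set \<Rightarrow> nat \<Rightarrow> nat" where
  "Good W X t = card {S. S \<subseteq> X \<and> card S = t \<and> (\<forall>w\<in>W. (\<forall>a\<in>S. poly w a = 0) \<longrightarrow> w = 0)}"

lemma subsp_diff: "subsp W \<Longrightarrow> x \<in> W \<Longrightarrow> y \<in> W \<Longrightarrow> x - y \<in> W"
proof -
  assume "subsp W" "x \<in> W" "y \<in> W"
  then have "x + smult (-1) y \<in> W" unfolding subsp_def by blast
  then show ?thesis by simp
qed

lemma subsp_Wa: "subsp W \<Longrightarrow> subsp (Wa W a)"
  unfolding subsp_def Wa_def by (auto simp: poly_add)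

lemma card_Wa:
  fixes W :: "'a::{finite,field} poly set"
  assumes sW: "subsp W" and fin: "finite W" and a: "a \<notin> cr W"
  shows "card W = card (UNIV::'a set) * card (Wa W a)"
proof -
  obtain w0 where w0: "w0 \<in> W" "poly w0 a \<noteq> 0" using a unfolding cr_def by auto
  define \<phi> where "\<phi> = (\<lambda>(c::'a, v). v + smult c w0)"
  have inj: "inj_on \<phi> (UNIV \<times> Wa W a)"
  proof (rule inj_onI)
    fix x y assume x: "x \<in> UNIV \<times> Wa W a" and y: "y \<in> UNIV \<times> Wa W a" and e: "\<phi> x = \<phi> y"
    obtain c1 v1 where x': "x = (c1, v1)" by (cases x)
    obtain c2 v2 where y': "y = (c2, v2)" by (cases y)
    have e': "v1 + smult c1 w0 = v2 + smult c2 w0" using e by (simp add: \<phi>_def x' y')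
    have "poly (v1 + smult c1 w0) a = poly (v2 + smult c2 w0) a" using e' by simp
    then have "c1 * poly w0 a = c2 * poly w0 a" using x y by (simp add: x' y' Wa_def)
    then have "c1 = c2" using w0 by simp
    then show "x = y" using e' x' y' by simp
  qed
  have img: "\<phi> ` (UNIV \<times> Wa W a) = W"
  proof
    show "\<phi> ` (UNIV \<times> Wa W a) \<subseteq> W"
      using sW w0 unfolding subsp_def Wa_def \<phi>_def by auto
    show "W \<subseteq> \<phi> ` (UNIV \<times> Wa W a)"
    proof
      fix w assume w: "w \<in> W"
      define c where "c = poly w a / poly w0 a"
      have "w - smult c w0 \<in> W" using subsp_diff[OF sW w] sW w0 unfolding subsp_def by blast
      moreover have "poly (w - smult c w0) a = 0" using w0 by (simp add: c_def)
      ultimately have "(c, w - smult c w0) \<in> UNIV \<times> Wa W a" by (simp add: Wa_def)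
      moreover have "\<phi> (c, w - smult c w0) = w" by (simp add: \<phi>_def)
      ultimately show "w \<in> \<phi> ` (UNIV \<times> Wa W a)" by (metis rev_image_eqI)
    qed
  qed
  have "card W = card ((UNIV::'a set) \<times> Wa W a)" using card_image[OF inj] img by simp
  also have "\<dots> = card (UNIV::'a set) * card (Wa W a)" by (simp add: card_cartesian_product)
  finally show ?thesis .
qed


lemma cr_bound:
  fixes W :: "'a::{finite,field} poly set"
  assumes sW: "subsp W" and deg: "\<forall>w\<in>W. degree w < k" and cW: "card W = card (UNIV::'a set) ^ d"
    and d: "1 \<le> d" and kq: "k \<le> card (UNIV::'a set)"
  shows "d + card (cr W) \<le> k"
proof -
  have q2: "2 \<le> card (UNIV::'a set)"
  proof -
    have "{0::'a, 1} \<subseteq> UNIV" by simp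
    then have "card {0::'a,1} \<le> card (UNIV::'a set)" by (intro card_mono) auto
    then show ?thesis by simp
  qed
  have "card (UNIV::'a set) ^ 1 \<le> card (UNIV::'a set) ^ d" using d q2 by (intro power_increasing) auto
  then have "card W \<ge> 2" using cW q2 by simp
  obtain w where w: "w \<in> W" "w \<noteq> 0"
  proof -
    have "\<not> W \<subseteq> {0}"
    proof
      assume "W \<subseteq> {0}"
      then have "card W \<le> card {0::'a poly}" by (intro card_mono) auto
      then have "card W \<le> 1" by simp
      then show False using \<open>card W \<ge> 2\<close> by simp
    qed
    then show ?thesis using that by blast
  qed
  define r where "r = card (cr W)"
  have "cr W \<subseteq> {x. poly w x = 0}" using w unfolding cr_def by auto
  then have "r \<le> card {x. poly w x = 0}" unfolding r_def by (intro card_mono) auto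
  also have "\<dots> \<le> degree w" by (rule card_poly_roots_bound[OF w(2)])
  also have "\<dots> < k" using deg w by auto
  finally have rk: "r < k" .
  have "card (UNIV - cr W) = card (UNIV::'a set) - r" unfolding r_def by (simp add: card_Diff_subset)
  then have "k - r \<le> card (UNIV - cr W)" using kq by simp
  then obtain E where E: "E \<subseteq> UNIV - cr W" "card E = k - r" "finite E"
    by (rule obtain_subset_with_card_n)
  define \<psi> where "\<psi> = (\<lambda>w. restrict (poly w) E)"
  have inj: "inj_on \<psi> W"
  proof (rule inj_onI)
    fix w1 w2 assume w1: "w1 \<in> W" and w2: "w2 \<in> W" and e: "\<psi> w1 = \<psi> w2"
    show "w1 = w2"
    proof (rule ccontr)
      assume ne: "w1 \<noteq> w2"
      define p where "p = w1 - w2"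
      have pW: "p \<in> W" using subsp_diff[OF sW w1 w2] p_def by simp
      have p0: "p \<noteq> 0" using ne p_def by simp
      have "E \<union> cr W \<subseteq> {x. poly p x = 0}"
      proof
        fix x assume "x \<in> E \<union> cr W"
        then show "x \<in> {x. poly p x = 0}"
        proof
          assume "x \<in> E"
          then have "poly w1 x = poly w2 x" using fun_cong[OF e, of x] \<open>x \<in> E\<close> by (simp add: \<psi>_def)
          then show ?thesis by (simp add: p_def)
        next
          assume "x \<in> cr W" then show ?thesis using pW unfolding cr_def by auto
        qed
      qed
      then have "card (E \<union> cr W) \<le> card {x. poly p x = 0}" by (intro card_mono) auto
      also have "\<dots> \<le> degree p" by (rule card_poly_roots_bound[OF p0])
      also have "\<dots> < k" using deg pW by auto
      finally have "card (E \<union> cr W) < k" .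
      moreover have "card (E \<union> cr W) = k - r + r" using E unfolding r_def
        by (subst card_Un_disjoint) auto
      ultimately show False using rk by simp
    qed
  qed
  have "\<psi> ` W \<subseteq> (\<Pi>\<^sub>E x\<in>E. (UNIV::'a set))" unfolding \<psi>_def by auto
  then have "card W \<le> card (\<Pi>\<^sub>E x\<in>E. (UNIV::'a set))"
  proof -
    have "card W = card (\<psi> ` W)" using card_image[OF inj] by simp
    also have "\<dots> \<le> card (\<Pi>\<^sub>E x\<in>E. (UNIV::'a set))"
      by (rule card_mono[OF finite_PiE[OF E(3)]]) (use \<open>\<psi> ` W \<subseteq> _\<close> in auto)
    finally show ?thesis .
  qed
  also have "\<dots> = card (UNIV::'a set) ^ (k - r)" using E by (simp add: card_PiE)
  finally have "card (UNIV::'a set) ^ d \<le> card (UNIV::'a set) ^ (k - r)" using cW by simp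
  then have "d \<le> k - r" using q2 by (simp add: power_increasing_iff)
  then show ?thesis using rk unfolding r_def by simp
qed



lemma Good_split:
  fixes W :: "'a::field poly set"
  assumes X: "finite X" and a: "a \<in> X"
  shows "Good W X (Suc t) = Good (Wa W a) (X - {a}) t + Good W (X - {a}) (Suc t)"
proof -
  define P where "P = (\<lambda>W S. \<forall>w\<in>W. (\<forall>x\<in>S. poly w x = (0::'a)) \<longrightarrow> w = 0)"
  define A1 where "A1 = {S. S \<subseteq> X - {a} \<and> card S = Suc t \<and> P W S}"
  define B where "B = {S. S \<subseteq> X - {a} \<and> card S = t \<and> P (Wa W a) S}"
  have eqA: "{S. S \<subseteq> X \<and> card S = Suc t \<and> P W S} = A1 \<union> insert a ` B"
  proof (intro equalityI subsetI)
    fix S assume S: "S \<in> {S. S \<subseteq> X \<and> card S = Suc t \<and> P W S}"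
    show "S \<in> A1 \<union> insert a ` B"
    proof (cases "a \<in> S")
      case False
      then have "S \<in> A1" using S unfolding A1_def by auto
      then show ?thesis by (rule UnI1)
    next
      case True
      have finS: "finite S" using S X finite_subset by blast
      have c: "card (S - {a}) = t" using S True finS by (simp add: card_Diff_singleton)
      have "P (Wa W a) (S - {a})" using S True unfolding P_def Wa_def by auto
      then have "S - {a} \<in> B"
        unfolding B_def using S c by auto
      moreover have "S = insert a (S - {a})" using True by auto
      ultimately have "S \<in> insert a ` B" by (metis rev_image_eqI)
      then show ?thesis by (rule UnI2)
    qed
  next
    fix S assume "S \<in> A1 \<union> insert a ` B"
    then show "S \<in> {S. S \<subseteq> X \<and> card S = Suc t \<and> P W S}"
    proof (rule UnE)
      assume "S \<in> A1" then show ?thesis unfolding A1_def by (simp add: subset_iff)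
    next
      assume "S \<in> insert a ` B"
      then obtain S' where S'B: "S' \<in> B" and SS: "S = insert a S'" by (rule imageE)
      have S'X: "S' \<subseteq> X - {a}" and cS': "card S' = t" and PS': "P (Wa W a) S'"
        using S'B unfolding B_def by auto
      have finS': "finite S'" using S'X X finite_subset by blast
      have "a \<notin> S'" using S'X by auto
      then have "card S = Suc t" using finS' cS' SS by simp
      moreover have "S \<subseteq> X" using S'X a SS by auto
      moreover have "P W S" unfolding P_def
      proof (intro ballI impI)
        fix w assume wW: "w \<in> W" and h: "\<forall>x\<in>S. poly w x = 0"
        have "poly w a = 0" using h SS by simp
        then have "w \<in> Wa W a" using wW unfolding Wa_def by simp
        moreover have "\<forall>x\<in>S'. poly w x = 0" using h SS by simp
        ultimately show "w = 0" using PS' unfolding P_def by blast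
      qed
      ultimately show ?thesis by simp
    qed
  qed
  have "A1 \<subseteq> Pow X" unfolding A1_def by blast
  then have fin1: "finite A1" using X by (meson finite_Pow_iff finite_subset)
  have "B \<subseteq> Pow X" unfolding B_def by blast
  then have fin2: "finite B" using X by (meson finite_Pow_iff finite_subset)
  have disj: "A1 \<inter> insert a ` B = {}"
  proof (rule ccontr)
    assume "A1 \<inter> insert a ` B \<noteq> {}"
    then obtain S where "S \<in> A1" "S \<in> insert a ` B" by blast
    then show False unfolding A1_def by blast
  qed
  have inj: "inj_on (insert a) B"
  proof (rule inj_onI)
    fix S1 S2 assume "S1 \<in> B" "S2 \<in> B" and e: "insert a S1 = insert a S2"
    then have "a \<notin> S1" "a \<notin> S2" unfolding B_def by blast+
    then show "S1 = S2" using e insert_ident by metis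
  qed
  have "Good W X (Suc t) = card (A1 \<union> insert a ` B)"
    unfolding Good_def using eqA unfolding P_def by simp
  also have "\<dots> = card A1 + card B"
    using card_Un_disjoint[OF fin1 finite_imageI[OF fin2] disj] card_image[OF inj] by simp
  also have "\<dots> = Good (Wa W a) (X - {a}) t + Good W (X - {a}) (Suc t)"
    unfolding Good_def A1_def B_def P_def by simp
  finally show ?thesis .
qed



lemma Good_d0:
  fixes W :: "'a::field poly set"
  assumes "subsp W" "card W = 1" "finite X"
  shows "Good W X t = card X choose t"
proof -
  have "0 \<in> W" using assms(1) unfolding subsp_def by blast
  then have W: "W = {0}" using assms(2) by (metis card_1_singletonE singletonD)
  have "{S. S \<subseteq> X \<and> card S = t \<and> (\<forall>w\<in>W. (\<forall>a\<in>S. poly w a = 0) \<longrightarrow> w = 0)}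
      = {S. S \<subseteq> X \<and> card S = t}" using W by simp
  then show ?thesis unfolding Good_def using n_subsets[OF assms(3)] by simp
qed

lemma main_ind:
  fixes W :: "'a::{finite,field} poly set"
  assumes "card X = n" "finite X" "subsp W" "\<forall>w\<in>W. degree w < k"
    "card W = card (UNIV::'a set) ^ d" "k \<le> card (UNIV::'a set)" "b \<le> card X"
    "k \<le> b + d + card (cr W - X)"
  shows "M t d (card X - b) b \<le> Good W X t"
  using assms
proof (induction n arbitrary: X W d b t)
  case 0
  show ?case
  proof (cases d)
    case 0
    then show ?thesis using Good_d0[of W X t] "0.prems" M_le[of t d "card X - b" b] by simp
  next
    case (Suc d')
    then show ?thesis using 0 M_zero_g[of d t b] by simp
  qed
next
  case (Suc n)
  note pr = Suc.prems
  show ?case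
  proof (cases d)
    case 0
    then show ?thesis using Good_d0[of W X t] pr M_le[of t d "card X - b" b] by simp
  next
    case (Suc d')
    show ?thesis
    proof (cases t)
      case 0
      then show ?thesis using Suc M_zero_t[of d] by simp
    next
      case (Suc t')
      have d1: "1 \<le> d" using \<open>d = Suc d'\<close> by simp
      have crb: "d + card (cr W) \<le> k" using cr_bound[OF pr(3) pr(4) pr(5) d1 pr(6)] .
      show ?thesis
      proof (cases "\<exists>a\<in>X. a \<in> cr W")
        case True
        then obtain a where a: "a \<in> X" "a \<in> cr W" by blast
        have e1: "cr W = (cr W \<inter> X) \<union> (cr W - X)" by blast
        have "card (cr W) = card (cr W \<inter> X) + card (cr W - X)"
          by (subst e1, rule card_Un_disjoint) auto
        moreover have "card (cr W \<inter> X) \<ge> 1"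
          using a by (metis Int_iff card_0_eq empty_iff finite less_one not_less)
        ultimately have "b \<ge> 1" using crb pr(8) by linarith
        then obtain b' where b': "b = Suc b'" by (cases b) auto
        have WaW: "Wa W a = W" using a unfolding Wa_def cr_def by auto
        have cX: "card (X - {a}) = n" using pr(1) a pr(2) by simp
        have finX': "finite (X - {a})" using pr(2) by simp
        have e2: "cr W - (X - {a}) = insert a (cr W - X)" using a by blast
        have "card (cr W - (X - {a})) = Suc (card (cr W - X))"
          unfolding e2 by (rule card_insert_disjoint) (use a in auto)
        then have J: "k \<le> b' + d + card (cr W - (X - {a}))" using pr(8) b' by simp
        have bX: "b' \<le> card (X - {a})" using pr(7) pr(1) cX b' by simp
        have g: "card X - b = card (X - {a}) - b'" using pr(1) cX b' by simp
        have IH1: "M t' d (card (X - {a}) - b') b' \<le> Good W (X - {a}) t'"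
          by (rule Suc.IH[OF cX finX' pr(3) pr(4) pr(5) pr(6) bX J])
        have IH2: "M (Suc t') d (card (X - {a}) - b') b' \<le> Good W (X - {a}) (Suc t')"
          by (rule Suc.IH[OF cX finX' pr(3) pr(4) pr(5) pr(6) bX J])
        have "M t d (card X - b) b = M t' d (card (X - {a}) - b') b' + M (Suc t') d (card (X - {a}) - b') b'"
          using M_P2[of t' d "card (X - {a}) - b'" b'] g b' \<open>t = Suc t'\<close> by simp
        also have "\<dots> \<le> Good W (X - {a}) t' + Good W (X - {a}) (Suc t')" using IH1 IH2 by simp
        also have "\<dots> = Good W X t"
          using Good_split[OF pr(2) a(1), of W t'] WaW \<open>t = Suc t'\<close> by simp
        finally show ?thesis .
      next
        case False
        show ?thesis
        proof (cases "card X - b = 0")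
          case True
          then show ?thesis using M_zero_g[of d t b] d1 by simp
        next
          case gpos: False
          then have "X \<noteq> {}" by auto
          then obtain a where a: "a \<in> X" by blast
          have acr: "a \<notin> cr W" using False a by blast
          have q0: "card (UNIV::'a set) > 0" by (simp add: card_gt_0_iff)
          have finW: "finite W" using pr(5) q0 by (intro card_ge_0_finite) simp
          have "card (UNIV::'a set) * card (Wa W a) = card (UNIV::'a set) * card (UNIV::'a set) ^ d'"
            using card_Wa[OF pr(3) finW acr] pr(5) \<open>d = Suc d'\<close> by simp
          then have cWa: "card (Wa W a) = card (UNIV::'a set) ^ d'" using q0 by simp
          have sWa: "subsp (Wa W a)" by (rule subsp_Wa[OF pr(3)])
          have degWa: "\<forall>w\<in>Wa W a. degree w < k" using pr(4) unfolding Wa_def by auto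
          have cX: "card (X - {a}) = n" using pr(1) a pr(2) by simp
          have finX': "finite (X - {a})" using pr(2) by simp
          have sub1: "insert a (cr W - X) \<subseteq> cr (Wa W a) - (X - {a})"
            unfolding cr_def Wa_def by auto
          have "card (insert a (cr W - X)) = Suc (card (cr W - X))"
            by (rule card_insert_disjoint) (use a in auto)
          moreover have "card (insert a (cr W - X)) \<le> card (cr (Wa W a) - (X - {a}))"
            by (rule card_mono[OF _ sub1]) simp
          ultimately have J1: "k \<le> b + d' + card (cr (Wa W a) - (X - {a}))"
            using pr(8) \<open>d = Suc d'\<close> by simp
          have "card (cr W - X) \<le> card (cr W - (X - {a}))" by (rule card_mono) auto
          then have J2: "k \<le> b + d + card (cr W - (X - {a}))" using pr(8) by simp
          have bX: "b \<le> card (X - {a})" using gpos pr(1) cX by simp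
          have g: "card X - b = Suc (card (X - {a}) - b)" using gpos pr(1) cX by simp
          have IH1: "M t' d' (card (X - {a}) - b) b \<le> Good (Wa W a) (X - {a}) t'"
            by (rule Suc.IH[OF cX finX' sWa degWa cWa pr(6) bX J1])
          have IH2: "M (Suc t') d (card (X - {a}) - b) b \<le> Good W (X - {a}) (Suc t')"
            by (rule Suc.IH[OF cX finX' pr(3) pr(4) pr(5) pr(6) bX J2])
          have "M t d (card X - b) b = M t' d' (card (X - {a}) - b) b + M (Suc t') d (card (X - {a}) - b) b"
            using M_P1[of t' d' "card (X - {a}) - b" b] g \<open>d = Suc d'\<close> \<open>t = Suc t'\<close> by simp
          also have "\<dots> \<le> Good (Wa W a) (X - {a}) t' + Good W (X - {a}) (Suc t')" using IH1 IH2 by simp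
          also have "\<dots> = Good W X t"
            using Good_split[OF pr(2) a, of W t'] \<open>t = Suc t'\<close> by simp
          finally show ?thesis .
        qed
      qed
    qed
  qed
qed



lemma deg_sum_less:
  fixes h :: "nat \<Rightarrow> 'a::field poly"
  assumes "1 \<le> k" "\<forall>j<l. degree (h j) < k"
  shows "degree (\<Sum>j<l. h j) < k"
  using assms(2)
proof (induction l)
  case 0 then show ?case using assms(1) by simp
next
  case (Suc l)
  then show ?case by (simp add: degree_add_less)
qed

lemma span_facts:
  fixes b :: "nat \<Rightarrow> 'a::{finite,field} poly" and l k :: nat
  defines "V \<equiv> {(\<Sum>j<l. smult (x j) (b j)) | x. True}"
  assumes k1: "1 \<le> k" and bd: "\<forall>j<l. degree (b j) < k" and bi: "lin_indep_polys b l"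
  shows "subsp V" "\<forall>w\<in>V. degree w < k" "card V = card (UNIV::'a set) ^ l"
proof -
  show "subsp V" unfolding subsp_def
  proof (intro conjI ballI allI impI)
    show "0 \<in> V" unfolding V_def by (rule CollectI, rule exI[of _ "\<lambda>_. 0"]) simp
  next
    fix u v assume "u \<in> V" "v \<in> V"
    then obtain x y where "u = (\<Sum>j<l. smult (x j) (b j))" "v = (\<Sum>j<l. smult (y j) (b j))"
      unfolding V_def by blast
    then have "u + v = (\<Sum>j<l. smult (x j + y j) (b j))" by (simp add: sum.distrib smult_add_left)
    then show "u + v \<in> V" unfolding V_def by (intro CollectI exI[of _ "\<lambda>j. x j + y j"]) simp
  next
    fix c u assume "u \<in> V"
    then obtain x where "u = (\<Sum>j<l. smult (x j) (b j))" unfolding V_def by blast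
    have "smult c (\<Sum>j<l. smult (x j) (b j)) = (\<Sum>j<l. smult (c * x j) (b j))"
      by (induction l) (simp_all add: smult_add_right)
    then have "smult c u = (\<Sum>j<l. smult (c * x j) (b j))" using \<open>u = _\<close> by simp
    then show "smult c u \<in> V" unfolding V_def by (intro CollectI exI[of _ "\<lambda>j. c * x j"]) simp
  qed
  show "\<forall>w\<in>V. degree w < k"
  proof
    fix w assume "w \<in> V"
    then obtain x where w: "w = (\<Sum>j<l. smult (x j) (b j))" unfolding V_def by blast
    have "\<forall>j<l. degree (smult (x j) (b j)) < k" using bd by (meson degree_smult_le le_less_trans)
    then show "degree w < k" unfolding w by (rule deg_sum_less[OF k1])
  qed
  define \<sigma> where "\<sigma> = (\<lambda>x. (\<Sum>j<l. smult (x j) (b j)))"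
  have img: "\<sigma> ` (\<Pi>\<^sub>E j\<in>{..<l}. (UNIV::'a set)) = V"
  proof
    show "\<sigma> ` (\<Pi>\<^sub>E j\<in>{..<l}. (UNIV::'a set)) \<subseteq> V" unfolding V_def \<sigma>_def by blast
    show "V \<subseteq> \<sigma> ` (\<Pi>\<^sub>E j\<in>{..<l}. (UNIV::'a set))"
    proof
      fix w assume "w \<in> V"
      then obtain x where w: "w = (\<Sum>j<l. smult (x j) (b j))" unfolding V_def by blast
      have "restrict x {..<l} \<in> (\<Pi>\<^sub>E j\<in>{..<l}. (UNIV::'a set))" by simp
      moreover have "\<sigma> (restrict x {..<l}) = w" unfolding \<sigma>_def w by (intro sum.cong) auto
      ultimately show "w \<in> \<sigma> ` (\<Pi>\<^sub>E j\<in>{..<l}. (UNIV::'a set))" by (metis rev_image_eqI)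
    qed
  qed
  have inj: "inj_on \<sigma> (\<Pi>\<^sub>E j\<in>{..<l}. (UNIV::'a set))"
  proof (rule inj_onI)
    fix x y assume x: "x \<in> (\<Pi>\<^sub>E j\<in>{..<l}. (UNIV::'a set))" and y: "y \<in> (\<Pi>\<^sub>E j\<in>{..<l}. (UNIV::'a set))"
      and e: "\<sigma> x = \<sigma> y"
    have "(\<Sum>j<l. smult (x j - y j) (b j)) = \<sigma> x - \<sigma> y"
      unfolding \<sigma>_def by (simp add: sum_subtractf smult_diff_left)
    then have "(\<Sum>j<l. smult (x j - y j) (b j)) = 0" using e by simp
    then have "\<forall>j<l. x j - y j = 0"
      using bi[unfolded lin_indep_polys_def, rule_format, of "\<lambda>j. x j - y j"] by simp
    then show "x = y" using x y by (intro extensionalityI[of _ "{..<l}"]) (auto simp: PiE_def)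
  qed
  show "card V = card (UNIV::'a set) ^ l"
    using card_image[OF inj] img by (simp add: card_PiE)
qed

theorem theorem2:
  fixes \<gamma> :: "'a::{finite,field}"
    and m n k s l t :: nat
    and y :: "nat \<Rightarrow> nat \<Rightarrow> 'a"
    and z f :: "'a poly"
    and b :: "nat \<Rightarrow> 'a poly"
  defines "q \<equiv> card (UNIV :: 'a set)"
  defines "N \<equiv> n div m"
  defines "R \<equiv> real k / real n"
  defines "close \<equiv> (\<lambda>g. real (frs_dist \<gamma> m N y g)
             \<le> (real s / real (s + 1)) * (1 - real m * R / (real m - real s + 1)) * real N)"
  defines "U \<equiv> affine_span z b l"
  assumes prim: "primitive_elem \<gamma>"
    and m_pos: "1 \<le> m" and n_le: "n \<le> q - 1" and m_dvd: "m dvd n"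
    and k_pos: "1 \<le> k" and k_lt: "k < n"
    and s_range: "1 \<le> s" "s \<le> m"
    and l_le: "l \<le> s - 1"
    and z_deg: "degree z < k"
    and b_deg: "\<forall>j<l. degree (b j) < k"
    and b_indep: "lin_indep_polys b l"
    and decoder: "\<forall>g. degree g < k \<and> close g \<longrightarrow> g \<in> U"
    and f_deg: "degree f < k"
    and f_close: "close f"
    and t_range: "l \<le> t" "t \<le> q - 1"
  shows "(\<Sum>i=l..t. real ((q - k + l - 1) choose i) * real ((k - l) choose (t - i)))
             / real ((q - 1) choose t)
         \<le> real (card {S :: 'a set. S \<subseteq> UNIV - {0} \<and> card S = t \<and>
                      {g \<in> U. \<forall>a\<in>S. poly g a = poly f a} = {f}})
             / real ((q - 1) choose t)
       \<and> (\<forall>S :: 'a set. S \<subseteq> UNIV - {0} \<and> card S = t \<longrightarrow>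
            ({g \<in> U. \<forall>a\<in>S. poly g a = poly f a} = {f} \<longleftrightarrow>
             (\<forall>g\<in>U. \<forall>h\<in>U. (\<forall>a\<in>S. poly g a = poly h a) \<longrightarrow> g = h)))"
proof -
  define V where "V = {(\<Sum>j<l. smult (x j) (b j)) | x. True}"
  have sV: "subsp V" and dV: "\<forall>w\<in>V. degree w < k" and cV: "card V = q ^ l"
    using span_facts[OF k_pos b_deg b_indep] unfolding V_def q_def by auto
  have fU: "f \<in> U" using decoder f_deg f_close by blast
  have memU: "g \<in> U \<longleftrightarrow> g - z \<in> V" for g
  proof
    assume "g \<in> U"
    then obtain x where "g = z + (\<Sum>j<l. smult (x j) (b j))"
      unfolding U_def affine_span_def by blast
    then show "g - z \<in> V" unfolding V_def by auto
  next
    assume "g - z \<in> V"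
    then obtain x where "g - z = (\<Sum>j<l. smult (x j) (b j))" unfolding V_def by blast
    then have "g = z + (\<Sum>j<l. smult (x j) (b j))" by (simp add: algebra_simps)
    then show "g \<in> U" unfolding U_def affine_span_def by blast
  qed
  have memU': "g \<in> U \<longleftrightarrow> g - f \<in> V" for g
  proof -
    have fz: "f - z \<in> V" using fU memU by blast
    have "g - z \<in> V \<longleftrightarrow> g - f \<in> V"
    proof
      assume "g - z \<in> V"
      then have "(g - z) - (f - z) \<in> V" using subsp_diff[OF sV _ fz] by blast
      then show "g - f \<in> V" by simp
    next
      assume "g - f \<in> V"
      then have "(g - f) + (f - z) \<in> V" using sV fz unfolding subsp_def by blast
      then show "g - z \<in> V" by simp
    qed
    then show ?thesis using memU by simp
  qed
  have key: "{g \<in> U. \<forall>a\<in>S. poly g a = poly f a} = {f} \<longleftrightarrow>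
             (\<forall>w\<in>V. (\<forall>a\<in>S. poly w a = 0) \<longrightarrow> w = 0)" for S
  proof
    assume H: "{g \<in> U. \<forall>a\<in>S. poly g a = poly f a} = {f}"
    show "\<forall>w\<in>V. (\<forall>a\<in>S. poly w a = 0) \<longrightarrow> w = 0"
    proof (intro ballI impI)
      fix w assume w: "w \<in> V" "\<forall>a\<in>S. poly w a = 0"
      have "f + w \<in> U" using memU' w by simp
      moreover have "\<forall>a\<in>S. poly (f + w) a = poly f a" using w by simp
      ultimately have "f + w \<in> {g \<in> U. \<forall>a\<in>S. poly g a = poly f a}" by blast
      then show "w = 0" using H by simp
    qed
  next
    assume H: "\<forall>w\<in>V. (\<forall>a\<in>S. poly w a = 0) \<longrightarrow> w = 0"
    show "{g \<in> U. \<forall>a\<in>S. poly g a = poly f a} = {f}"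
    proof (intro equalityI subsetI)
      fix g assume "g \<in> {g \<in> U. \<forall>a\<in>S. poly g a = poly f a}"
      then have "g - f \<in> V" "\<forall>a\<in>S. poly (g - f) a = 0" using memU' by auto
      then have "g - f = 0" using H by blast
      then show "g \<in> {f}" by simp
    next
      fix g assume "g \<in> {f}"
      then show "g \<in> {g \<in> U. \<forall>a\<in>S. poly g a = poly f a}" using fU by simp
    qed
  qed
  have part2: "\<forall>S :: 'a set. S \<subseteq> UNIV - {0} \<and> card S = t \<longrightarrow>
            ({g \<in> U. \<forall>a\<in>S. poly g a = poly f a} = {f} \<longleftrightarrow>
             (\<forall>g\<in>U. \<forall>h\<in>U. (\<forall>a\<in>S. poly g a = poly h a) \<longrightarrow> g = h))"
  proof (intro allI impI)
    fix S :: "'a set"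
    have "(\<forall>w\<in>V. (\<forall>a\<in>S. poly w a = 0) \<longrightarrow> w = 0) \<longleftrightarrow>
          (\<forall>g\<in>U. \<forall>h\<in>U. (\<forall>a\<in>S. poly g a = poly h a) \<longrightarrow> g = h)"
    proof
      assume H: "\<forall>w\<in>V. (\<forall>a\<in>S. poly w a = 0) \<longrightarrow> w = 0"
      show "\<forall>g\<in>U. \<forall>h\<in>U. (\<forall>a\<in>S. poly g a = poly h a) \<longrightarrow> g = h"
      proof (intro ballI impI)
        fix g h assume g: "g \<in> U" and h: "h \<in> U" and e: "\<forall>a\<in>S. poly g a = poly h a"
        have "(g - f) - (h - f) \<in> V" using memU' g h subsp_diff[OF sV] by blast
        moreover have "\<forall>a\<in>S. poly ((g - f) - (h - f)) a = 0" using e by simp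
        ultimately have "(g - f) - (h - f) = 0" using H by blast
        then show "g = h" by simp
      qed
    next
      assume H: "\<forall>g\<in>U. \<forall>h\<in>U. (\<forall>a\<in>S. poly g a = poly h a) \<longrightarrow> g = h"
      show "\<forall>w\<in>V. (\<forall>a\<in>S. poly w a = 0) \<longrightarrow> w = 0"
      proof (intro ballI impI)
        fix w assume w: "w \<in> V" "\<forall>a\<in>S. poly w a = 0"
        have "f + w \<in> U" using memU' w by simp
        moreover have "\<forall>a\<in>S. poly (f + w) a = poly f a" using w by simp
        ultimately have "f + w = f" using H fU by blast
        then show "w = 0" by simp
      qed
    qed
    then show "{g \<in> U. \<forall>a\<in>S. poly g a = poly f a} = {f} \<longleftrightarrow>
             (\<forall>g\<in>U. \<forall>h\<in>U. (\<forall>a\<in>S. poly g a = poly h a) \<longrightarrow> g = h)"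
      using key by simp
  qed
  have kq: "k \<le> q" using k_lt n_le by simp
  have lk: "l \<le> k"
  proof (cases "l = 0")
    case True then show ?thesis by simp
  next
    case False
    then have "l + card (cr V) \<le> k"
      using cr_bound[OF sV dV _ _ ] cV kq unfolding q_def by simp
    then show ?thesis by simp
  qed
  define X where "X = (UNIV :: 'a set) - {0}"
  have cX: "card X = q - 1" unfolding X_def q_def by (simp add: card_Diff_subset)
  have ind: "M t l (card X - (k - l)) (k - l) \<le> Good V X t"
    by (rule main_ind[OF refl _ sV dV]) (use cV kq lk cX k_lt n_le in \<open>auto simp: q_def X_def\<close>)
  have gq: "card X - (k - l) = q - k + l - 1" using cX lk kq k_lt n_le by simp
  have GoodEq: "Good V X t = card {S :: 'a set. S \<subseteq> UNIV - {0} \<and> card S = t \<and>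
                      {g \<in> U. \<forall>a\<in>S. poly g a = poly f a} = {f}}"
    unfolding Good_def X_def using key by simp
  have sumeq: "(\<Sum>i=l..t. real ((q - k + l - 1) choose i) * real ((k - l) choose (t - i)))
      = real (M t l (q - k + l - 1) (k - l))"
    unfolding M_eq by simp
  have "(\<Sum>i=l..t. real ((q - k + l - 1) choose i) * real ((k - l) choose (t - i)))
      \<le> real (card {S :: 'a set. S \<subseteq> UNIV - {0} \<and> card S = t \<and>
                      {g \<in> U. \<forall>a\<in>S. poly g a = poly f a} = {f}})"
    using ind unfolding sumeq gq GoodEq by simp
  then have part1: "(\<Sum>i=l..t. real ((q - k + l - 1) choose i) * real ((k - l) choose (t - i)))
             / real ((q - 1) choose t)
         \<le> real (card {S :: 'a set. S \<subseteq> UNIV - {0} \<and> card S = t \<and>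
                      {g \<in> U. \<forall>a\<in>S. poly g a = poly f a} = {f}})
             / real ((q - 1) choose t)"
    by (rule divide_right_mono) simp
  show ?thesis using part1 part2 by blast
qed
end
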